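(* Let $X$ and $Y$ be random variables with values in $\mathbb{N}=\{0,1,2,\dots\}$ such that $P\{X=0\}\neq 1$, $P\{Y=0\}\neq1$, and let $\hat p_X(z)=\mathbb{E}[z^X]$, $\hat p_Y(z)=\mathbb{E}[z^Y]$ for $z\in[0,1]$. Let $f_0$ be a probability density on $\mathbb{N}$ with probability generating function $\hat f_0(z)=\sum_{v\ge0}z^vf_0(v)$. Then the initial value problem $$\frac{\partial}{\partial t}\hat f_t(z)=\hat f_t(\hat p_X(z))\,\hat f_t(\hat p_Y(z))-\hat f_t(z),\qquad z\in[0,1],\ t>0,$$ with initial datum $\hat f_0$, has a unique global solution. For any $t>0$ this solution can be written as $$\hat f_t(z)=e^{-t}\sum_{n\ge0}(1-e^{-t})^n\,\hat q_n(z),$$ where $\hat q_0=\hat f_0$ and, for $n\ge1$, $$\hat q_n(z)=\frac1n\sum_{j=0}^{n-1}\hat q_j(\hat p_X(z))\,\hat q_{n-1-j}(\hat p_Y(z)).$$ Moreover, $\hat f_t$ is the probability generating function of a probability density on $\mathbb{N}$ for every $t>0$.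
   Context: This equation is the probability-generating-function form of the Boltzmann-type equation $\partial_t f_t(v)=Q^+(f_t,f_t)(v)-f_t(v)$, $v\in\mathbb{N}$, where for probability densities $f,g$ on $\mathbb{N}$, $Q^+(f,g)(v)=P\{\sum_{i=1}^{V_1}Y_i+\sum_{i=1}^{V_2}X_i=v\}$ with $V_1\sim f$, $V_2\sim g$, $X_i$ i.i.d. with the law of $X$, $Y_i$ i.i.d. with the law of $Y$, all independent. *)

theory Defs
  imports "HOL-Probability.Probability"
begin

definition pgf :: "nat pmf \<Rightarrow> real \<Rightarrow> real" where
  "pgf p z = (\<Sum>v. z ^ v * pmf p v)"

fun qhat :: "nat pmf \<Rightarrow> nat pmf \<Rightarrow> nat pmf \<Rightarrow> nat \<Rightarrow> real \<Rightarrow> real" where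
  "qhat f0 pX pY 0 z = pgf f0 z"
| "qhat f0 pX pY (Suc n) z =
     (1 / real (Suc n)) *
     (\<Sum>j<Suc n. qhat f0 pX pY j (pgf pX z) * qhat f0 pX pY (n - j) (pgf pY z))"

definition is_global_solution ::
  "nat pmf \<Rightarrow> nat pmf \<Rightarrow> nat pmf \<Rightarrow> (real \<Rightarrow> real \<Rightarrow> real) \<Rightarrow> bool" where
  "is_global_solution f0 pX pY F \<longleftrightarrow>
     (\<forall>z\<in>{0..1}. F 0 z = pgf f0 z) \<and>
     (\<forall>z\<in>{0..1}. continuous_on {0..} (\<lambda>t. F t z)) \<and>
     (\<forall>z\<in>{0..1}. \<forall>t>0.
        ((\<lambda>s. F s z) has_real_derivative
           (F t (pgf pX z) * F t (pgf pY z) - F t z)) (at t)) \<and>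
     (\<forall>T\<ge>0. \<exists>B. \<forall>t\<in>{0..T}. \<forall>z\<in>{0..1}. \<bar>F t z\<bar> \<le> B)"

end

theory Submission
  imports Defs
begin

lemma summable_pmf_nat: "summable (\<lambda>x. pmf (p::nat pmf) x)"
proof -
  have "(\<Sum>x. ennreal (pmf p x)) = 1"
    using nn_integral_pmf[where p=p and A=UNIV] by (simp add: nn_integral_count_space_nat measure_pmf.emeasure_space_1)
  then show ?thesis
    by (intro summable_suminf_not_top) auto
qed

lemma pgf_summable: assumes "z \<in> {0..1}" shows "summable (\<lambda>v. z ^ v * pmf p v)"
  by (rule summable_comparison_test'[OF summable_pmf_nat[of p], where N=0])
     (use assms in \<open>auto intro!: mult_left_le_one_le power_le_one\<close>)

lemma pgf_nn: assumes "z \<in> {0..1}"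
  shows "(\<integral>\<^sup>+x. ennreal (z ^ x) \<partial>measure_pmf p) = ennreal (pgf p z)"
proof -
  have "(\<integral>\<^sup>+x. ennreal (z ^ x) \<partial>measure_pmf p) = (\<Sum>x. ennreal (z ^ x * pmf p x))"
    using assms by (simp add: nn_integral_measure_pmf nn_integral_count_space_nat ennreal_mult'' mult.commute)
  also have "\<dots> = ennreal (pgf p z)"
    unfolding pgf_def using assms by (intro suminf_ennreal2 pgf_summable) auto
  finally show ?thesis .
qed

lemma pgf_bounds: assumes "z \<in> {0..1}" shows "0 \<le> pgf p z" "pgf p z \<le> 1"
proof -
  show "0 \<le> pgf p z" unfolding pgf_def using assms
    by (intro suminf_nonneg pgf_summable) auto
  have "ennreal (pgf p z) = (\<integral>\<^sup>+x. ennreal (z ^ x) \<partial>measure_pmf p)" using pgf_nn[OF assms] by simp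
  also have "\<dots> \<le> (\<integral>\<^sup>+x. 1 \<partial>measure_pmf p)"
    using assms by (intro nn_integral_mono) (auto intro!: power_le_one)
  also have "\<dots> = 1" by simp
  finally show "pgf p z \<le> 1" by (simp add: ennreal_le_1)
qed


lemma pgf_eqI: assumes "z \<in> {0..1}" "0 \<le> r"
  and "(\<integral>\<^sup>+x. ennreal (z ^ x) \<partial>measure_pmf p) = ennreal r"
shows "pgf p z = r"
  using assms pgf_nn[OF assms(1), of p] pgf_bounds[OF assms(1), of p] by simp

fun nsum :: "nat pmf \<Rightarrow> nat \<Rightarrow> nat pmf" where
  "nsum pX 0 = return_pmf 0"
| "nsum pX (Suc v) = bind_pmf (nsum pX v) (\<lambda>s. map_pmf (\<lambda>x. s + x) pX)"

definition addp :: "nat pmf \<Rightarrow> nat pmf \<Rightarrow> nat pmf" where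
  "addp p q = bind_pmf p (\<lambda>a. map_pmf (\<lambda>b. a + b) q)"

definition compp :: "nat pmf \<Rightarrow> nat pmf \<Rightarrow> nat pmf" where
  "compp f pX = bind_pmf f (nsum pX)"

lemma pgf_addp: assumes z: "z \<in> {0..1}" shows "pgf (addp p q) z = pgf p z * pgf q z"
proof (rule pgf_eqI[OF z])
  show "0 \<le> pgf p z * pgf q z" using pgf_bounds[OF z] by simp
  have "(\<integral>\<^sup>+x. ennreal (z ^ x) \<partial>measure_pmf (addp p q))
      = (\<integral>\<^sup>+a. (\<integral>\<^sup>+b. ennreal (z ^ a) * ennreal (z ^ b) \<partial>measure_pmf q) \<partial>measure_pmf p)"
    unfolding addp_def using z by (simp add: power_add ennreal_mult)
  also have "\<dots> = (\<integral>\<^sup>+a. ennreal (z ^ a) * ennreal (pgf q z) \<partial>measure_pmf p)"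
    by (simp add: nn_integral_cmult pgf_nn[OF z])
  also have "\<dots> = ennreal (pgf p z) * ennreal (pgf q z)"
    by (simp add: nn_integral_multc pgf_nn[OF z])
  also have "\<dots> = ennreal (pgf p z * pgf q z)" using pgf_bounds[OF z] by (simp add: ennreal_mult)
  finally show "(\<integral>\<^sup>+x. ennreal (z ^ x) \<partial>measure_pmf (addp p q)) = ennreal (pgf p z * pgf q z)" .
qed

lemma addp_nsum: "nsum pX (Suc v) = addp (nsum pX v) pX"
  by (simp add: addp_def)

lemma pgf_nsum: assumes z: "z \<in> {0..1}" shows "pgf (nsum pX v) z = pgf pX z ^ v"
proof (induction v)
  case 0
  show ?case by (rule pgf_eqI[OF z]) auto
next
  case (Suc v)
  then show ?case by (simp only: addp_nsum pgf_addp[OF z]) simp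
qed

lemma pgf_compp: assumes z: "z \<in> {0..1}" shows "pgf (compp f pX) z = pgf f (pgf pX z)"
proof -
  have a: "pgf pX z \<in> {0..1}" using pgf_bounds[OF z] by auto
  show ?thesis
  proof (rule pgf_eqI[OF z])
    show "0 \<le> pgf f (pgf pX z)" using pgf_bounds[OF a] by simp
    have "(\<integral>\<^sup>+x. ennreal (z ^ x) \<partial>measure_pmf (compp f pX))
       = (\<integral>\<^sup>+v. (\<integral>\<^sup>+x. ennreal (z ^ x) \<partial>measure_pmf (nsum pX v)) \<partial>measure_pmf f)"
      unfolding compp_def by simp
    also have "\<dots> = (\<integral>\<^sup>+v. ennreal (pgf pX z ^ v) \<partial>measure_pmf f)"
      by (simp add: pgf_nn[OF z] pgf_nsum[OF z])
    also have "\<dots> = ennreal (pgf f (pgf pX z))" by (rule pgf_nn[OF a])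
    finally show "(\<integral>\<^sup>+x. ennreal (z ^ x) \<partial>measure_pmf (compp f pX)) = ennreal (pgf f (pgf pX z))" .
  qed
qed

lemma pgf_unif: assumes z: "z \<in> {0..1}"
  shows "pgf (bind_pmf (pmf_of_set {..n}) K) z = (\<Sum>j\<le>n. pgf (K j) z) / real (Suc n)"
proof (rule pgf_eqI[OF z])
  show "0 \<le> (\<Sum>j\<le>n. pgf (K j) z) / real (Suc n)"
    using pgf_bounds[OF z] by (auto intro!: sum_nonneg divide_nonneg_nonneg)
  have "(\<integral>\<^sup>+x. ennreal (z ^ x) \<partial>measure_pmf (bind_pmf (pmf_of_set {..n}) K))
      = (\<integral>\<^sup>+j. ennreal (pgf (K j) z) \<partial>measure_pmf (pmf_of_set {..n}))"
    by (subst nn_integral_bind_pmf) (simp add: pgf_nn[OF z])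
  also have "\<dots> = (\<Sum>j\<le>n. ennreal (pgf (K j) z)) / of_nat (card {..n})"
    by (rule nn_integral_pmf_of_set) auto
  also have "\<dots> = ennreal (\<Sum>j\<le>n. pgf (K j) z) / ennreal (real (Suc n))"
    using pgf_bounds[OF z] by (simp only: card_atMost ennreal_of_nat_eq_real_of_nat sum_ennreal)
  also have "\<dots> = ennreal ((\<Sum>j\<le>n. pgf (K j) z) / real (Suc n))"
    using pgf_bounds[OF z] by (intro divide_ennreal sum_nonneg) auto
  finally show "(\<integral>\<^sup>+x. ennreal (z ^ x) \<partial>measure_pmf (bind_pmf (pmf_of_set {..n}) K))
      = ennreal ((\<Sum>j\<le>n. pgf (K j) z) / real (Suc n))" .
qed

lemma pgf_geom: assumes z: "z \<in> {0..1}" and p: "0 < p" "p \<le> 1"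
  shows "pgf (bind_pmf (geometric_pmf p) K) z = (\<Sum>n. (1 - p) ^ n * p * pgf (K n) z)"
proof (rule pgf_eqI[OF z])
  have sm: "summable (\<lambda>n. (1 - p) ^ n * p * pgf (K n) z)"
  proof (rule summable_comparison_test'[where N=0])
    show "summable (\<lambda>n. (1 - p) ^ n * p)" using p
      by (intro summable_mult2 summable_geometric) auto
    show "norm ((1 - p) ^ n * p * pgf (K n) z) \<le> (1 - p) ^ n * p" for n
      using pgf_bounds[OF z, of "K n"] p
      by (auto simp: abs_mult intro!: mult_left_le)
  qed
  show "0 \<le> (\<Sum>n. (1 - p) ^ n * p * pgf (K n) z)"
    using pgf_bounds[OF z] p by (intro suminf_nonneg sm) auto
  have "(\<integral>\<^sup>+x. ennreal (z ^ x) \<partial>measure_pmf (bind_pmf (geometric_pmf p) K))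
      = (\<integral>\<^sup>+n. ennreal (pgf (K n) z) \<partial>measure_pmf (geometric_pmf p))"
    by (subst nn_integral_bind_pmf) (simp add: pgf_nn[OF z])
  also have "\<dots> = (\<Sum>n. ennreal ((1 - p) ^ n) * ennreal p * ennreal (pgf (K n) z))"
    using p by (simp add: nn_integral_measure_pmf nn_integral_count_space_nat ennreal_mult'')
  also have "\<dots> = (\<Sum>n. ennreal ((1 - p) ^ n * p * pgf (K n) z))"
    using p pgf_bounds[OF z] by (simp add: ennreal_mult)
  also have "\<dots> = ennreal (\<Sum>n. (1 - p) ^ n * p * pgf (K n) z)"
    using pgf_bounds[OF z] p by (intro suminf_ennreal2 sm) auto
  finally show "(\<integral>\<^sup>+x. ennreal (z ^ x) \<partial>measure_pmf (bind_pmf (geometric_pmf p) K))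
      = ennreal (\<Sum>n. (1 - p) ^ n * p * pgf (K n) z)" .
qed


fun Qp :: "nat pmf \<Rightarrow> nat pmf \<Rightarrow> nat pmf \<Rightarrow> nat \<Rightarrow> nat pmf" where
  "Qp f0 pX pY 0 = f0"
| "Qp f0 pX pY (Suc n) = bind_pmf (pmf_of_set {..n})
     (\<lambda>j. addp (compp (Qp f0 pX pY (min j n)) pX) (compp (Qp f0 pX pY (n - j)) pY))"

lemma qhat_pgf: "z \<in> {0..1} \<Longrightarrow> qhat f0 pX pY n z = pgf (Qp f0 pX pY n) z"
proof (induction n arbitrary: z rule: less_induct)
  case (less n)
  show ?case
  proof (cases n)
    case 0 then show ?thesis by simp
  next
    case (Suc m)
    have a: "pgf pX z \<in> {0..1}" "pgf pY z \<in> {0..1}" using pgf_bounds[OF less.prems] by auto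
    have "pgf (Qp f0 pX pY n) z =
       (\<Sum>j\<le>m. pgf (Qp f0 pX pY (min j m)) (pgf pX z) * pgf (Qp f0 pX pY (m - j)) (pgf pY z)) / real (Suc m)"
      unfolding Suc by (simp only: Qp.simps pgf_unif[OF less.prems] pgf_addp[OF less.prems] pgf_compp[OF less.prems])
    also have "\<dots> = (\<Sum>j\<le>m. qhat f0 pX pY j (pgf pX z) * qhat f0 pX pY (m - j) (pgf pY z)) / real (Suc m)"
    proof (intro arg_cong2[where f="(/)"] sum.cong refl)
      fix j assume j: "j \<in> {..m}"
      have 1: "qhat f0 pX pY j (pgf pX z) = pgf (Qp f0 pX pY j) (pgf pX z)"
        by (rule less.IH) (use Suc j a in auto)
      have 2: "qhat f0 pX pY (m - j) (pgf pY z) = pgf (Qp f0 pX pY (m - j)) (pgf pY z)"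
        by (rule less.IH) (use Suc j a in auto)
      show "pgf (Qp f0 pX pY (min j m)) (pgf pX z) * pgf (Qp f0 pX pY (m - j)) (pgf pY z) =
        qhat f0 pX pY j (pgf pX z) * qhat f0 pX pY (m - j) (pgf pY z)"
        using j by (simp add: 1 2)
    qed
    also have "\<dots> = qhat f0 pX pY n z"
      unfolding Suc by (simp add: lessThan_Suc_atMost)
    finally show ?thesis by simp
  qed
qed

lemma qhat_bounds: "z \<in> {0..1} \<Longrightarrow> \<bar>qhat f0 pX pY n z\<bar> \<le> 1"
  using qhat_pgf pgf_bounds by (metis abs_of_nonneg)


lemma ps_summable:
  fixes c :: "nat \<Rightarrow> real"
  assumes c: "\<And>n. \<bar>c n\<bar> \<le> 1" and x: "\<bar>x\<bar> < 1"
  shows "summable (\<lambda>n. norm (c n * x ^ n))" "summable (\<lambda>n. c n * x ^ n)"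
proof -
  show *: "summable (\<lambda>n. norm (c n * x ^ n))"
  proof (rule summable_comparison_test'[where N=0])
    show "summable (\<lambda>n. \<bar>x\<bar> ^ n)" using x by (intro summable_geometric) auto
    show "norm (norm (c n * x ^ n)) \<le> \<bar>x\<bar> ^ n" for n
      using c[of n] by (simp add: abs_mult power_abs mult_left_le_one_le)
  qed
  show "summable (\<lambda>n. c n * x ^ n)" by (rule summable_norm_cancel[OF *])
qed

definition Phi :: "(nat \<Rightarrow> real) \<Rightarrow> real \<Rightarrow> real" where
  "Phi c u = (\<Sum>n. c n * u ^ n)"

lemma Phi_deriv:
  fixes c :: "nat \<Rightarrow> real"
  assumes c: "\<And>n. \<bar>c n\<bar> \<le> 1" and u: "\<bar>u\<bar> < 1"
  shows "DERIV (Phi c) u :> (\<Sum>n. diffs c n * u ^ n)"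
proof -
  have "summable (\<lambda>n. c n * ((1 + \<bar>u\<bar>) / 2) ^ n)"
    by (rule ps_summable(2)[OF c]) (use u in auto)
  from termdiffs_strong[OF this, of u] u show ?thesis
    unfolding Phi_def[abs_def] by simp
qed

lemma diffs_prod:
  fixes u :: real
  assumes z: "z \<in> {0..1}" and u: "\<bar>u\<bar> < 1"
  shows "(\<Sum>n. diffs (\<lambda>n. qhat f0 pX pY n z) n * u ^ n) =
    Phi (\<lambda>n. qhat f0 pX pY n (pgf pX z)) u * Phi (\<lambda>n. qhat f0 pX pY n (pgf pY z)) u"
proof -
  have a: "pgf pX z \<in> {0..1}" "pgf pY z \<in> {0..1}" using pgf_bounds[OF z] by auto
  let ?a = "\<lambda>n. qhat f0 pX pY n (pgf pX z) * u ^ n"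
  let ?b = "\<lambda>n. qhat f0 pX pY n (pgf pY z) * u ^ n"
  have "Phi (\<lambda>n. qhat f0 pX pY n (pgf pX z)) u * Phi (\<lambda>n. qhat f0 pX pY n (pgf pY z)) u
     = (\<Sum>k. \<Sum>i\<le>k. ?a i * ?b (k - i))"
    unfolding Phi_def
    by (rule Cauchy_product; rule ps_summable(1)[OF qhat_bounds u]) (use a in auto)
  also have "\<dots> = (\<Sum>n. diffs (\<lambda>n. qhat f0 pX pY n z) n * u ^ n)"
  proof (rule suminf_cong)
    fix k
    have "(\<Sum>i\<le>k. ?a i * ?b (k - i)) =
        (\<Sum>i\<le>k. qhat f0 pX pY i (pgf pX z) * qhat f0 pX pY (k - i) (pgf pY z) * u ^ k)"
    proof (rule sum.cong[OF refl])
      fix i assume "i \<in> {..k}"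
      then have "u ^ i * u ^ (k - i) = u ^ k" by (simp flip: power_add)
      then show "?a i * ?b (k - i) = qhat f0 pX pY i (pgf pX z) * qhat f0 pX pY (k - i) (pgf pY z) * u ^ k"
        by (metis (no_types, lifting) mult.assoc mult.left_commute)
    qed
    also have "\<dots> = diffs (\<lambda>n. qhat f0 pX pY n z) k * u ^ k"
      by (simp add: diffs_def lessThan_Suc_atMost sum_distrib_right)
    finally show "(\<Sum>i\<le>k. ?a i * ?b (k - i)) = diffs (\<lambda>n. qhat f0 pX pY n z) k * u ^ k" .
  qed
  finally show ?thesis by simp
qed

definition Fs :: "nat pmf \<Rightarrow> nat pmf \<Rightarrow> nat pmf \<Rightarrow> real \<Rightarrow> real \<Rightarrow> real" where
  "Fs f0 pX pY t z = exp (- t) * (\<Sum>n. (1 - exp (- t)) ^ n * qhat f0 pX pY n z)"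

lemma Fs_Phi: "Fs f0 pX pY t z = exp (- t) * Phi (\<lambda>n. qhat f0 pX pY n z) (1 - exp (- t))"
  unfolding Fs_def Phi_def by (simp add: mult.commute)

lemma Fs_deriv:
  assumes z: "z \<in> {0..1}" and t: "\<bar>1 - exp (- t)\<bar> < 1"
  shows "((\<lambda>s. Fs f0 pX pY s z) has_real_derivative
     (Fs f0 pX pY t (pgf pX z) * Fs f0 pX pY t (pgf pY z) - Fs f0 pX pY t z)) (at t)"
proof -
  let ?c = "\<lambda>n. qhat f0 pX pY n z"
  have d1: "((\<lambda>s. 1 - exp (- s)) has_real_derivative exp (- t)) (at t)"
    by (auto intro!: derivative_eq_intros)
  have d2: "DERIV (Phi ?c) (1 - exp (- t)) :> (\<Sum>n. diffs ?c n * (1 - exp (- t)) ^ n)"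
    by (rule Phi_deriv[OF qhat_bounds[OF z] t])
  have d3: "((\<lambda>s. exp (- s)) has_real_derivative - exp (- t)) (at t)"
    by (auto intro!: derivative_eq_intros)
  have "((\<lambda>s. exp (- s) * Phi ?c (1 - exp (- s))) has_real_derivative
      - exp (- t) * Phi ?c (1 - exp (- t)) +
      (\<Sum>n. diffs ?c n * (1 - exp (- t)) ^ n) * exp (- t) * exp (- t)) (at t)"
    using DERIV_mult[OF d3 DERIV_chain2[OF d2 d1]] by (simp add: algebra_simps)
  then show ?thesis
    unfolding Fs_Phi diffs_prod[OF z t] by (simp add: algebra_simps)
qed

lemma Fs_pgf:
  assumes z: "z \<in> {0..1}" and t: "0 \<le> t"
  shows "Fs f0 pX pY t z = pgf (bind_pmf (geometric_pmf (exp (- t))) (Qp f0 pX pY)) z"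
proof -
  have p: "0 < exp (- t)" "exp (- t) \<le> 1" using t by auto
  have u: "\<bar>1 - exp (- t)\<bar> < 1" using p by auto
  have "pgf (bind_pmf (geometric_pmf (exp (- t))) (Qp f0 pX pY)) z
     = (\<Sum>n. exp (- t) * ((1 - exp (- t)) ^ n * qhat f0 pX pY n z))"
    by (simp add: pgf_geom[OF z p] qhat_pgf[OF z] mult_ac)
  also have "\<dots> = Fs f0 pX pY t z"
    unfolding Fs_def
    by (rule suminf_mult) (use ps_summable(2)[of "\<lambda>n. qhat f0 pX pY n z", OF qhat_bounds[OF z] u] in \<open>simp add: mult.commute\<close>)
  finally show ?thesis by simp
qed


lemma deriv_bnd:
  fixes ga gb gw fa fb fw B M :: real
  assumes "\<bar>ga\<bar> \<le> B" "\<bar>fb\<bar> \<le> B" "\<bar>gb - fb\<bar> \<le> M" "\<bar>ga - fa\<bar> \<le> M" "\<bar>gw - fw\<bar> \<le> M"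
    "0 \<le> B" "0 \<le> M"
  shows "\<bar>(ga * gb - gw) - (fa * fb - fw)\<bar> \<le> (2 * B + 1) * M"
proof -
  have 1: "\<bar>ga * (gb - fb)\<bar> \<le> B * M" unfolding abs_mult using assms by (intro mult_mono) auto
  have 2: "\<bar>(ga - fa) * fb\<bar> \<le> M * B" unfolding abs_mult using assms by (intro mult_mono) auto
  have "(ga * gb - gw) - (fa * fb - fw) = ga * (gb - fb) + (ga - fa) * fb - (gw - fw)"
    by (simp add: algebra_simps)
  then have "\<bar>(ga * gb - gw) - (fa * fb - fw)\<bar> \<le> \<bar>ga * (gb - fb)\<bar> + \<bar>(ga - fa) * fb\<bar> + \<bar>gw - fw\<bar>"
    by linarith
  also have "\<dots> \<le> (2 * B + 1) * M" using 1 2 assms by (simp add: algebra_simps)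
  finally show ?thesis .
qed

lemma uniq:
  fixes F G :: "real \<Rightarrow> real \<Rightarrow> real" and \<alpha> \<beta> :: "real \<Rightarrow> real"
  assumes ab: "\<And>z. z \<in> {0..1} \<Longrightarrow> \<alpha> z \<in> {0..1}" "\<And>z. z \<in> {0..1} \<Longrightarrow> \<beta> z \<in> {0..1}"
    and init: "\<And>z. z \<in> {0..1} \<Longrightarrow> G 0 z = F 0 z"
    and contF: "\<And>z. z \<in> {0..1} \<Longrightarrow> continuous_on {0..} (\<lambda>t. F t z)"
    and contG: "\<And>z. z \<in> {0..1} \<Longrightarrow> continuous_on {0..} (\<lambda>t. G t z)"
    and dF: "\<And>z t. z \<in> {0..1} \<Longrightarrow> t > 0 \<Longrightarrow>
        ((\<lambda>s. F s z) has_real_derivative (F t (\<alpha> z) * F t (\<beta> z) - F t z)) (at t)"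
    and dG: "\<And>z t. z \<in> {0..1} \<Longrightarrow> t > 0 \<Longrightarrow>
        ((\<lambda>s. G s z) has_real_derivative (G t (\<alpha> z) * G t (\<beta> z) - G t z)) (at t)"
    and bF: "\<And>T. T \<ge> 0 \<Longrightarrow> \<exists>B. \<forall>t\<in>{0..T}. \<forall>z\<in>{0..1}. \<bar>F t z\<bar> \<le> B"
    and bG: "\<And>T. T \<ge> 0 \<Longrightarrow> \<exists>B. \<forall>t\<in>{0..T}. \<forall>z\<in>{0..1}. \<bar>G t z\<bar> \<le> B"
    and T: "T \<ge> 0" and z0: "z0 \<in> {0..1}"
  shows "G T z0 = F T z0"
proof -
  obtain B1 where B1: "\<forall>t\<in>{0..T}. \<forall>z\<in>{0..1}. \<bar>F t z\<bar> \<le> B1" using bF[OF T] by blast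
  obtain B2 where B2: "\<forall>t\<in>{0..T}. \<forall>z\<in>{0..1}. \<bar>G t z\<bar> \<le> B2" using bG[OF T] by blast
  define B where "B = max (max B1 B2) 0"
  have B0: "0 \<le> B" unfolding B_def by simp
  have FB: "\<bar>F t z\<bar> \<le> B" if "t \<in> {0..T}" "z \<in> {0..1}" for t z
    using B1 that unfolding B_def by force
  have GB: "\<bar>G t z\<bar> \<le> B" if "t \<in> {0..T}" "z \<in> {0..1}" for t z
    using B2 that unfolding B_def by force
  define D where "D t z = G t z - F t z" for t z
  have DB: "\<bar>D t z\<bar> \<le> 2 * B" if "t \<in> {0..T}" "z \<in> {0..1}" for t z
    using FB[OF that] GB[OF that] unfolding D_def by linarith
  define L where "L = 2 * B + 1"
  have L0: "0 < L" unfolding L_def using B0 by simp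
  define h where "h = 1 / (2 * L)"
  have h0: "0 < h" unfolding h_def using L0 by simp
  have hL: "h * L = 1 / 2" unfolding h_def using L0 by simp
  have main: "\<forall>s\<in>{0..T}. s \<le> real k * h \<longrightarrow> (\<forall>w\<in>{0..1}. D s w = 0)" for k :: nat
  proof (induction k)
    case 0
    then show ?case using h0 init unfolding D_def by auto
  next
    case (Suc k)
    define t0 where "t0 = real k * h"
    have t00: "0 \<le> t0" unfolding t0_def using h0 by simp
    define S where "S = {\<bar>D s w\<bar> | s w. s \<in> {0..T} \<and> t0 \<le> s \<and> s \<le> t0 + h \<and> w \<in> {0..1}} \<union> {0}"
    have bdd: "bdd_above S"
    proof (rule bdd_aboveI)
      fix x assume "x \<in> S"
      then show "x \<le> 2 * B" unfolding S_def using DB B0 by auto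
    qed
    define M where "M = Sup S"
    have inS: "\<bar>D s w\<bar> \<le> M" if "s \<in> {0..T}" "t0 \<le> s" "s \<le> t0 + h" "w \<in> {0..1}" for s w
      unfolding M_def by (rule cSup_upper[OF _ bdd]) (use that in \<open>auto simp: S_def\<close>)
    have M0: "0 \<le> M" unfolding M_def by (rule cSup_upper[OF _ bdd]) (auto simp: S_def)
    have key: "\<bar>D s w\<bar> \<le> M / 2" if s: "s \<in> {0..T}" "t0 \<le> s" "s \<le> t0 + h" and w: "w \<in> {0..1}" for s w
    proof (cases "s = t0")
      case True
      then show ?thesis using Suc.IH s w M0 unfolding t0_def by auto
    next
      case False
      then have lt: "t0 < s" using s by simp
      have Dt0: "D t0 w = 0" using Suc.IH s w lt t00 unfolding t0_def by auto
      define Dd where "Dd r = (G r (\<alpha> w) * G r (\<beta> w) - G r w) - (F r (\<alpha> w) * F r (\<beta> w) - F r w)" for r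
      have cont: "continuous_on {t0..s} (\<lambda>r. D r w)"
        unfolding D_def
        by (intro continuous_on_diff; rule continuous_on_subset[OF _ ]) (use contF contG w t00 in auto)
      have der: "((\<lambda>r. D r w) has_derivative (*) (Dd r)) (at r)" if "t0 < r" "r < s" for r
      proof -
        have "((\<lambda>r. D r w) has_real_derivative Dd r) (at r)"
          unfolding D_def Dd_def using that t00 w by (intro DERIV_diff dF dG) auto
        then show ?thesis by (simp add: has_field_derivative_def)
      qed
      obtain \<xi> where xi: "t0 < \<xi>" "\<xi> < s" "D s w - D t0 w = Dd \<xi> * (s - t0)"
        using mvt[OF lt cont der] by metis
      have xiT: "\<xi> \<in> {0..T}" using xi s t00 by auto
      have "\<bar>Dd \<xi>\<bar> \<le> (2 * B + 1) * M"
        unfolding Dd_def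
      proof (rule deriv_bnd)
        show "\<bar>G \<xi> (\<alpha> w)\<bar> \<le> B" by (rule GB[OF xiT ab(1)[OF w]])
        show "\<bar>F \<xi> (\<beta> w)\<bar> \<le> B" by (rule FB[OF xiT ab(2)[OF w]])
        show "\<bar>G \<xi> (\<beta> w) - F \<xi> (\<beta> w)\<bar> \<le> M"
          using inS[OF xiT _ _ ab(2)[OF w]] xi s unfolding D_def by auto
        show "\<bar>G \<xi> (\<alpha> w) - F \<xi> (\<alpha> w)\<bar> \<le> M"
          using inS[OF xiT _ _ ab(1)[OF w]] xi s unfolding D_def by auto
        show "\<bar>G \<xi> w - F \<xi> w\<bar> \<le> M"
          using inS[OF xiT _ _ w] xi s unfolding D_def by auto
      qed (use B0 M0 in auto)
      then have "\<bar>D s w\<bar> \<le> (L * M) * h"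
        unfolding xi(3)[unfolded Dt0, simplified] abs_mult L_def
        using xi s M0 L0 by (intro mult_mono) auto
      also have "\<dots> = M / 2" using hL by (simp add: algebra_simps)
      finally show ?thesis .
    qed
    have "M \<le> M / 2"
      unfolding M_def[of] apply (rule cSup_least)
      using key M0 by (auto simp: S_def M_def)
    then have Mle: "M \<le> 0" by simp
    show ?case
    proof (intro ballI impI)
      fix s w :: real assume s: "s \<in> {0..T}" "s \<le> real (Suc k) * h" and w: "w \<in> {0..1}"
      show "D s w = 0"
      proof (cases "s \<le> t0")
        case True then show ?thesis using Suc.IH s w unfolding t0_def by auto
      next
        case False
        then have "\<bar>D s w\<bar> \<le> M" using s w by (intro inS) (auto simp: t0_def algebra_simps)
        then show ?thesis using Mle by simp
      qed
    qed
  qed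
  obtain k :: nat where k: "T / h \<le> real k" using real_arch_simple by blast
  then have "T \<le> real k * h" using h0 by (simp add: field_simps)
  then have "D T z0 = 0" using main[of k] T z0 by auto
  then show ?thesis unfolding D_def by simp
qed


theorem proposition3p1:
  fixes pX pY f0 :: "nat pmf"
  assumes "pmf pX 0 \<noteq> 1" and "pmf pY 0 \<noteq> 1"
  shows "\<exists>F. is_global_solution f0 pX pY F \<and>
           (\<forall>G. is_global_solution f0 pX pY G \<longrightarrow>
                 (\<forall>t\<ge>0. \<forall>z\<in>{0..1}. G t z = F t z)) \<and>
           (\<forall>t>0. \<forall>z\<in>{0..1}.
              F t z = exp (- t) * (\<Sum>n. (1 - exp (- t)) ^ n * qhat f0 pX pY n z)) \<and>
           (\<forall>t>0. \<exists>p :: nat pmf. \<forall>z\<in>{0..1}. F t z = pgf p z)"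
proof (rule exI[of _ "Fs f0 pX pY"], intro conjI allI impI ballI)
  let ?F = "Fs f0 pX pY"
  have ab: "pgf pX z \<in> {0..1}" "pgf pY z \<in> {0..1}" if "z \<in> {0..1}" for z
    using pgf_bounds[OF that] by auto
  have u: "\<bar>1 - exp (- t)\<bar> < 1" if "0 \<le> t" for t :: real using that by auto
  have der: "((\<lambda>s. ?F s z) has_real_derivative (?F t (pgf pX z) * ?F t (pgf pY z) - ?F t z)) (at t)"
    if "z \<in> {0..1}" "0 \<le> t" for z t
    using Fs_deriv[OF that(1) u[OF that(2)]] .
  have bnd: "\<bar>?F t z\<bar> \<le> 1" if "z \<in> {0..1}" "0 \<le> t" for z t
    using Fs_pgf[OF that, of f0 pX pY] pgf_bounds[OF that(1)] by (metis abs_of_nonneg)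
  have cont: "continuous_on {0..} (\<lambda>t. ?F t z)" if "z \<in> {0..1}" for z
    by (rule continuous_at_imp_continuous_on) (use der[OF that] DERIV_isCont in auto)
  have bF: "\<exists>B. \<forall>t\<in>{0..T}. \<forall>z\<in>{0..1}. \<bar>?F t z\<bar> \<le> B" for T :: real
    by (intro exI[of _ 1] ballI bnd) auto
  show sol: "is_global_solution f0 pX pY ?F"
    unfolding is_global_solution_def
  proof (intro conjI ballI allI impI)
    fix z :: real assume z: "z \<in> {0..1}"
    show "?F 0 z = pgf f0 z" using Fs_pgf[OF z, of 0 f0 pX pY] by (simp add: bind_return_pmf)
    show "continuous_on {0..} (\<lambda>t. ?F t z)" by (rule cont[OF z])
    fix t :: real assume "0 < t"
    then show "((\<lambda>s. ?F s z) has_real_derivative (?F t (pgf pX z) * ?F t (pgf pY z) - ?F t z)) (at t)"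
      using der[OF z] by simp
  next
    fix T :: real assume "0 \<le> T"
    show "\<exists>B. \<forall>t\<in>{0..T}. \<forall>z\<in>{0..1}. \<bar>?F t z\<bar> \<le> B" by (rule bF)
  qed
  fix G :: "real \<Rightarrow> real \<Rightarrow> real" and t z :: real assume G: "is_global_solution f0 pX pY G" and t: "0 \<le> t" and z: "z \<in> {0..1}"
  have sol': "(\<forall>z\<in>{0..1}. ?F 0 z = pgf f0 z) \<and>
     (\<forall>z\<in>{0..1}. continuous_on {0..} (\<lambda>t. ?F t z)) \<and>
     (\<forall>z\<in>{0..1}. \<forall>t>0.
        ((\<lambda>s. ?F s z) has_real_derivative
           (?F t (pgf pX z) * ?F t (pgf pY z) - ?F t z)) (at t)) \<and>
     (\<forall>T\<ge>0. \<exists>B. \<forall>t\<in>{0..T}. \<forall>z\<in>{0..1}. \<bar>?F t z\<bar> \<le> B)"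
    using sol unfolding is_global_solution_def .
  have G': "(\<forall>z\<in>{0..1}. G 0 z = pgf f0 z) \<and>
     (\<forall>z\<in>{0..1}. continuous_on {0..} (\<lambda>t. G t z)) \<and>
     (\<forall>z\<in>{0..1}. \<forall>t>0.
        ((\<lambda>s. G s z) has_real_derivative
           (G t (pgf pX z) * G t (pgf pY z) - G t z)) (at t)) \<and>
     (\<forall>T\<ge>0. \<exists>B. \<forall>t\<in>{0..T}. \<forall>z\<in>{0..1}. \<bar>G t z\<bar> \<le> B)"
    using G unfolding is_global_solution_def .
  show "G t z = ?F t z"
    by (rule uniq[where \<alpha>="pgf pX" and \<beta>="pgf pY", OF ab(1) ab(2) _ _ _ _ _ _ _ t z])
       (use sol' G' in auto)
next
  fix t :: real and z :: real assume "0 < t" "z \<in> {0..1}"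
  show "Fs f0 pX pY t z = exp (- t) * (\<Sum>n. (1 - exp (- t)) ^ n * qhat f0 pX pY n z)"
    by (simp add: Fs_def)
next
  fix t :: real assume t: "0 < t"
  show "\<exists>p :: nat pmf. \<forall>z\<in>{0..1}. Fs f0 pX pY t z = pgf p z"
    using Fs_pgf[of _ t f0 pX pY] t by auto
qed

end
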